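(* Let $\mathcal{L}\subset\mathcal{L}_*$ be lineages with hierarchical generators $\mathcal{H},\mathcal{H}_*$. Then (i) for every $\varphi\in\mathcal{H}_*$ there exists $k\ge\mathrm{gap}_{\mathcal{H}_*}(\varphi)$ with $\mathcal{O}(\varphi,-k,\mathcal{H})\neq\emptyset$; (ii) for every $\varphi\in\mathcal{H}_*\cap\mathcal{H}$, $\mathrm{gap}_{\mathcal{H}_*}(\varphi)\le\mathrm{gap}_{\mathcal{H}}(\varphi)$.
   Context: Fix integers $d\ge1$, $n\ge2$, $m\ge2$; $s=n-1$, $p=m-1$. B-splines $\varphi^\ell_{\vec i}(\vec x)=\prod_kQ(n^\ell x_k-i_k)$ for $\ell\ge0$, $\vec i\in\mathbb{Z}^d$, $Q$ the uniform B-spline of order $m$ with knots $0,\dots,m$; $\mathfrak{B}$ the set of all of them; $\mathcal{B}^0=\{\varphi^0_{\vec i}:\vec i\in[-p:0]^d\}$. Children $\mathrm{ch}(\varphi^\ell_{\vec i})=\{\varphi^{\ell+1}_{\vec k}:n\vec i\le\vec k\le n\vec i+sm\}$, extended to sets by union. Cells $I^\ell_{\vec i}=\prod_k[i_kn^{-\ell},(i_k+1)n^{-\ell})$, cell children $\mathrm{ch}(I^\ell_{\vec i})=\{I^{\ell+1}_{\vec k}:n\vec i\le\vec k\le n\vec i+s\}$, $\mathrm{ch}^k$ iterated, $\mathrm{ch}^{-k}(I)=\{J:I\in\mathrm{ch}^k(J)\}$. $\mathbb{I}(\varphi^\ell_{\vec i})=\{I^\ell_{\vec k}:\vec i\le\vec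 k\le\vec i+p\}$, $\mathbb{I}^k(\varphi)=\mathrm{ch}^k(\mathbb{I}(\varphi))$ ($k\in\mathbb{Z}$), $\mathbb{B}^k(I)=\{\varphi\in\mathfrak{B}:I\in\mathbb{I}^{-k}(\varphi)\}$, extended to sets by union; $\mathcal{O}(\varphi,j,\mathcal{H})=\mathbb{B}^j(\mathbb{I}(\varphi))\cap\mathcal{H}$. A lineage is a finite $\mathcal{L}\subset\mathfrak{B}$ with $\mathcal{L}\subset\mathcal{B}^0\cup\mathrm{ch}(\mathcal{L})$; its hierarchical generator is $(\mathcal{B}^0\cup\mathrm{ch}(\mathcal{L}))\setminus\mathcal{L}$. For $\varphi\in\mathcal{H}$, $\mathrm{gap}_{\mathcal{H}}(\varphi)=\sup\{g\in\mathbb{Z}:\mathcal{O}(\varphi,-g,\mathcal{H})\neq\emptyset\}$. *)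

theory Defs
  imports Main
begin

text \<open>A B-spline phi^l_i is represented by its level and index vector (l, i),
  with i an integer list of length d. Distinct pairs give distinct functions
  (the support of phi^l_i is prod_k [i_k n^-l, (i_k+m) n^-l]). Cells I^l_i are
  represented by the same kind of pair. Parameters n, m are the refinement
  factor and spline order; s = n-1, p = m-1.\<close>

type_synonym idx = "nat \<times> int list"

definition vle :: "int list \<Rightarrow> int list \<Rightarrow> bool" where
  "vle a b = list_all2 (\<le>) a b"

definition Bfrak :: "nat \<Rightarrow> idx set" where
  "Bfrak d = {(l, i). length i = d}"

definition B0 :: "nat \<Rightarrow> nat \<Rightarrow> idx set" where
  "B0 d m = {(0, i) | i. length i = d \<and> (\<forall>x \<in> set i. - (int m - 1) \<le> x \<and> x \<le> 0)}"

definition bch :: "nat \<Rightarrow> nat \<Rightarrow> idx \<Rightarrow> idx set" where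
  "bch n m phi = (case phi of (l, i) \<Rightarrow>
     {(Suc l, k) | k. vle (map (\<lambda>x. int n * x) i) k
                    \<and> vle k (map (\<lambda>x. int n * x + (int n - 1) * int m) i)})"

definition Bch :: "nat \<Rightarrow> nat \<Rightarrow> idx set \<Rightarrow> idx set" where
  "Bch n m S = \<Union> (bch n m ` S)"

definition lineage :: "nat \<Rightarrow> nat \<Rightarrow> nat \<Rightarrow> idx set \<Rightarrow> bool" where
  "lineage d n m L \<longleftrightarrow> finite L \<and> L \<subseteq> Bfrak d \<and> L \<subseteq> B0 d m \<union> Bch n m L"

definition hgen :: "nat \<Rightarrow> nat \<Rightarrow> nat \<Rightarrow> idx set \<Rightarrow> idx set" where
  "hgen d n m L = (B0 d m \<union> Bch n m L) - L"

definition supp_cells :: "nat \<Rightarrow> idx \<Rightarrow> idx set" where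
  "supp_cells m phi = (case phi of (l, i) \<Rightarrow>
     {(l, k) | k. vle i k \<and> vle k (map (\<lambda>x. x + (int m - 1)) i)})"

definition cch :: "nat \<Rightarrow> idx \<Rightarrow> idx set" where
  "cch n c = (case c of (l, i) \<Rightarrow>
     {(Suc l, k) | k. vle (map (\<lambda>x. int n * x) i) k
                    \<and> vle k (map (\<lambda>x. int n * x + (int n - 1)) i)})"

fun cch_pow :: "nat \<Rightarrow> nat \<Rightarrow> idx \<Rightarrow> idx set" where
  "cch_pow n 0 c = {c}"
| "cch_pow n (Suc j) c = \<Union> (cch n ` cch_pow n j c)"

definition cell_iter :: "nat \<Rightarrow> int \<Rightarrow> idx set \<Rightarrow> idx set" where
  "cell_iter n k S =
     (if 0 \<le> k then \<Union> (cch_pow n (nat k) ` S)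
      else {J. \<exists>I \<in> S. I \<in> cch_pow n (nat (- k)) J})"

definition Iset :: "nat \<Rightarrow> nat \<Rightarrow> int \<Rightarrow> idx \<Rightarrow> idx set" where
  "Iset n m k phi = cell_iter n k (supp_cells m phi)"

definition BB :: "nat \<Rightarrow> nat \<Rightarrow> nat \<Rightarrow> int \<Rightarrow> idx set \<Rightarrow> idx set" where
  "BB d n m k S = {phi \<in> Bfrak d. \<exists>I \<in> S. I \<in> Iset n m (- k) phi}"

definition Ov :: "nat \<Rightarrow> nat \<Rightarrow> nat \<Rightarrow> idx \<Rightarrow> int \<Rightarrow> idx set \<Rightarrow> idx set" where
  "Ov d n m phi j H = BB d n m j (supp_cells m phi) \<inter> H"

definition gap :: "nat \<Rightarrow> nat \<Rightarrow> nat \<Rightarrow> idx set \<Rightarrow> idx \<Rightarrow> int" where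
  "gap d n m H phi = Sup {g::int. Ov d n m phi (- g) H \<noteq> {}}"

end

theory Submission
  imports Defs
begin

lemma vle_nth: "vle a b \<longleftrightarrow> length a = length b \<and> (\<forall>t<length a. a!t \<le> b!t)"
  unfolding vle_def by (simp add: list_all2_conv_all_nth)

lemma cch_pow_trans: "J \<in> cch_pow n a K \<Longrightarrow> I \<in> cch_pow n b J \<Longrightarrow> I \<in> cch_pow n (a+b) K"
proof (induction b arbitrary: I)
  case 0 then show ?case by simp
next
  case (Suc b)
  then obtain J' where "J' \<in> cch_pow n b J" "I \<in> cch n J'" by auto
  with Suc.IH[of J'] Suc.prems show ?case by auto
qed

lemma cch_level: "I \<in> cch n J \<Longrightarrow> fst I = Suc (fst J)"
  unfolding cch_def by (auto split: prod.splits)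

lemma cch_pow_level: "I \<in> cch_pow n b J \<Longrightarrow> fst I = fst J + b"
proof (induction b arbitrary: I)
  case 0 then show ?case by simp
next
  case (Suc b)
  then obtain J' where "J' \<in> cch_pow n b J" "I \<in> cch n J'" by auto
  with Suc.IH[of J'] cch_level[of I n J'] show ?case by auto
qed

lemma div_facts:
  fixes c i k :: int and n m :: nat
  assumes "n \<ge> 1" "int n * i \<le> k" "k \<le> int n * i + (int n - 1) * int m"
    "k \<le> c" "c \<le> k + (int m - 1)"
  shows "i \<le> c div int n" "c div int n \<le> i + (int m - 1)"
    "int n * (c div int n) \<le> c" "c \<le> int n * (c div int n) + (int n - 1)"
proof -
  have np: "int n > 0" using assms by simp
  have dm: "c = int n * (c div int n) + c mod int n" by simp
  have m0: "0 \<le> c mod int n" "c mod int n < int n" using np by simp_all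
  have "int n * i \<le> c" using assms by linarith
  then have "int n * i < int n * (c div int n + 1)" using dm m0 unfolding distrib_left by linarith
  then have "i < c div int n + 1" using np by (simp add: mult_less_cancel_left)
  then show "i \<le> c div int n" by linarith
  have "c \<le> int n * i + (int n - 1) * int m + (int m - 1)" using assms by linarith
  also have "\<dots> = int n * (i + int m) - 1" by (simp add: algebra_simps)
  finally have "c < int n * (i + int m)" by linarith
  then have "int n * (c div int n) < int n * (i + int m)" using dm m0 by linarith
  then have "c div int n < i + int m" using np by (simp add: mult_less_cancel_left)
  then show "c div int n \<le> i + (int m - 1)" by linarith
  show "int n * (c div int n) \<le> c" using dm m0 by linarith
  show "c \<le> int n * (c div int n) + (int n - 1)" using dm m0 by linarith
qed

lemma child_supp:
  assumes "n \<ge> 1" "psi \<in> bch n m chi" "c \<in> supp_cells m psi"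
  shows "\<exists>K \<in> supp_cells m chi. c \<in> cch n K"
proof -
  obtain l i where chi: "chi = (l, i)" by (cases chi)
  obtain k where psi: "psi = (Suc l, k)" and
    v1: "vle (map (\<lambda>x. int n * x) i) k" and
    v2: "vle k (map (\<lambda>x. int n * x + (int n - 1) * int m) i)"
    using assms(2) unfolding chi bch_def by auto
  obtain cv where c: "c = (Suc l, cv)" and w1: "vle k cv" and w2: "vle cv (map (\<lambda>x. x + (int m - 1)) k)"
    using assms(3) unfolding psi supp_cells_def by auto
  have len: "length k = length i" "length cv = length i"
    using v1 w1 by (auto simp: vle_nth)
  define a where "a = map (\<lambda>x. x div int n) cv"
  have H: "\<And>t. t < length i \<Longrightarrow> int n * (i!t) \<le> k!t \<and> k!t \<le> int n * (i!t) + (int n - 1) * int m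
      \<and> k!t \<le> cv!t \<and> cv!t \<le> k!t + (int m - 1)"
    using v1 v2 w1 w2 len by (auto simp: vle_nth)
  have D: "\<And>t. t < length i \<Longrightarrow> i!t \<le> cv!t div int n \<and> cv!t div int n \<le> i!t + (int m - 1)
      \<and> int n * (cv!t div int n) \<le> cv!t \<and> cv!t \<le> int n * (cv!t div int n) + (int n - 1)"
  proof -
    fix t assume "t < length i"
    with H[of t] have "int n * (i!t) \<le> k!t" "k!t \<le> int n * (i!t) + (int n - 1) * int m"
      "k!t \<le> cv!t" "cv!t \<le> k!t + (int m - 1)" by auto
    from div_facts[OF assms(1) this] show "?thesis t" by blast
  qed
  have "vle i a" "vle a (map (\<lambda>x. x + (int m - 1)) i)"
    "vle (map (\<lambda>x. int n * x) a) cv" "vle cv (map (\<lambda>x. int n * x + (int n - 1)) a)"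
    using D len by (simp_all add: vle_nth a_def)
  then have "(l, a) \<in> supp_cells m chi" "c \<in> cch n (l, a)"
    unfolding chi c supp_cells_def cch_def by simp_all
  then show ?thesis by blast
qed

lemma bch_len: assumes "(l', k) \<in> bch n m (l, i)" shows "length k = length i \<and> l' = Suc l"
proof -
  have "l' = Suc l" "vle (map (\<lambda>x. int n * x) i) k" using assms by (simp_all add: bch_def)
  then show ?thesis by (simp add: vle_nth)
qed

lemma B0_Bfrak: "B0 d m \<subseteq> Bfrak d"
  unfolding B0_def Bfrak_def by auto

lemma Bch_Bfrak: "S \<subseteq> Bfrak d \<Longrightarrow> Bch n m S \<subseteq> Bfrak d"
proof
  fix x assume as: "S \<subseteq> Bfrak d" "x \<in> Bch n m S"
  then obtain y where y: "y \<in> S" "x \<in> bch n m y" unfolding Bch_def by blast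
  obtain l i where yy: "y = (l, i)" by (cases y)
  obtain l' k where xx: "x = (l', k)" by (cases x)
  have "length i = d" using y(1) as(1) yy unfolding Bfrak_def by auto
  then show "x \<in> Bfrak d" using bch_len[of l' k n m l i] y(2) xx yy unfolding Bfrak_def by simp
qed

lemma hgen_Bfrak: "lineage d n m L \<Longrightarrow> hgen d n m L \<subseteq> Bfrak d"
  unfolding hgen_def lineage_def using B0_Bfrak Bch_Bfrak by blast

lemma ancestor:
  assumes n: "n \<ge> 1" and L: "lineage d n m L" and Ls: "lineage d n m Ls" and sub: "L \<subseteq> Ls"
  shows "\<forall>psi. fst psi = l \<longrightarrow> psi \<in> B0 d m \<union> Bch n m Ls \<longrightarrow> psi \<notin> L \<longrightarrow>
     (\<exists>chi \<in> hgen d n m L. \<exists>j. \<forall>c \<in> supp_cells m psi. \<exists>K \<in> supp_cells m chi. c \<in> cch_pow n j K)"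
proof (induction l)
  case 0
  show ?case
  proof (intro allI impI)
    fix psi :: idx assume a: "fst psi = 0" "psi \<in> B0 d m \<union> Bch n m Ls" "psi \<notin> L"
    have "psi \<in> hgen d n m L" using a unfolding hgen_def Bch_def bch_def by (auto split: prod.splits)
    then show "\<exists>chi \<in> hgen d n m L. \<exists>j. \<forall>c \<in> supp_cells m psi. \<exists>K \<in> supp_cells m chi. c \<in> cch_pow n j K"
      by (intro bexI[of _ psi] exI[of _ 0]) auto
  qed
next
  case (Suc l)
  show ?case
  proof (intro allI impI)
    fix psi :: idx assume a: "fst psi = Suc l" "psi \<in> B0 d m \<union> Bch n m Ls" "psi \<notin> L"
    show "\<exists>chi \<in> hgen d n m L. \<exists>j. \<forall>c \<in> supp_cells m psi. \<exists>K \<in> supp_cells m chi. c \<in> cch_pow n j K"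
    proof (cases "psi \<in> hgen d n m L")
      case True then show ?thesis by (intro bexI[of _ psi] exI[of _ 0]) auto
    next
      case False
      then have "psi \<notin> B0 d m" "psi \<notin> Bch n m L" using a unfolding hgen_def by auto
      with a obtain chi1 where c1: "chi1 \<in> Ls" "psi \<in> bch n m chi1" unfolding Bch_def by auto
      have "chi1 \<notin> L" using c1 \<open>psi \<notin> Bch n m L\<close> unfolding Bch_def by auto
      have "fst chi1 = l" using c1(2) a(1) unfolding bch_def by (auto split: prod.splits)
      moreover have "chi1 \<in> B0 d m \<union> Bch n m Ls" using c1(1) Ls unfolding lineage_def by auto
      ultimately obtain chi j where ch: "chi \<in> hgen d n m L"
        "\<forall>c \<in> supp_cells m chi1. \<exists>K \<in> supp_cells m chi. c \<in> cch_pow n j K"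
        using Suc.IH \<open>chi1 \<notin> L\<close> by blast
      have "\<forall>c \<in> supp_cells m psi. \<exists>K \<in> supp_cells m chi. c \<in> cch_pow n (j+1) K"
      proof
        fix c assume "c \<in> supp_cells m psi"
        then obtain K1 where K1: "K1 \<in> supp_cells m chi1" "c \<in> cch n K1"
          using child_supp[OF n c1(2)] by blast
        then obtain K where K: "K \<in> supp_cells m chi" "K1 \<in> cch_pow n j K" using ch(2) by blast
        have "c \<in> cch_pow n 1 K1" using K1(2) by simp
        from cch_pow_trans[OF K(2) this] K(1) show "\<exists>K \<in> supp_cells m chi. c \<in> cch_pow n (j+1) K" by blast
      qed
      with ch(1) show ?thesis by blast
    qed
  qed
qed

lemma gap_facts:
  assumes m: "m \<ge> 1" and L: "lineage d n m L" and phi: "phi \<in> hgen d n m L"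
  defines "X \<equiv> {g::int. Ov d n m phi (- g) (hgen d n m L) \<noteq> {}}"
  shows "0 \<in> X" "bdd_above X"
proof -
  have pb: "phi \<in> Bfrak d" using hgen_Bfrak[OF L] phi by auto
  obtain l i where p: "phi = (l, i)" by (cases phi)
  have "phi \<in> supp_cells m phi" unfolding p supp_cells_def using pb m
    by (auto simp: vle_nth)
  moreover then have "phi \<in> Iset n m 0 phi" unfolding Iset_def cell_iter_def by simp
  ultimately have "phi \<in> Ov d n m phi 0 (hgen d n m L)"
    unfolding Ov_def BB_def using pb phi by auto
  then show "0 \<in> X" unfolding X_def by auto
  have "\<forall>g \<in> X. g \<le> int (fst phi)"
  proof
    fix g assume "g \<in> X"
    then obtain psi I where "I \<in> supp_cells m phi" "I \<in> Iset n m g psi"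
      unfolding X_def Ov_def BB_def by auto
    then show "g \<le> int (fst phi)"
    proof (cases "0 \<le> g")
      case True
      with \<open>I \<in> Iset n m g psi\<close> obtain J where "I \<in> cch_pow n (nat g) J"
        unfolding Iset_def cell_iter_def by auto
      from cch_pow_level[OF this] have "fst I = fst J + nat g" .
      moreover have "fst I = fst phi" using \<open>I \<in> supp_cells m phi\<close>
        unfolding supp_cells_def by (auto split: prod.splits)
      ultimately show ?thesis using True by linarith
    qed auto
  qed
  then show "bdd_above X" by (auto simp: bdd_above_def)
qed

lemma part_i:
  assumes n: "n \<ge> 1" and m: "m \<ge> 1" and L: "lineage d n m L" and Ls: "lineage d n m Ls" and sub: "L \<subseteq> Ls"
    and phi: "phi \<in> hgen d n m Ls"
  shows "\<exists>k. k \<ge> gap d n m (hgen d n m Ls) phi \<and> Ov d n m phi (- k) (hgen d n m L) \<noteq> {}"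
proof -
  define X where "X = {g::int. Ov d n m phi (- g) (hgen d n m Ls) \<noteq> {}}"
  have X0: "0 \<in> X" using gap_facts(1)[OF m Ls phi] X_def by simp
  have "gap d n m (hgen d n m Ls) phi - 1 < Sup X" unfolding gap_def X_def by simp
  then obtain g where g: "g \<in> X" "gap d n m (hgen d n m Ls) phi - 1 < g"
    using less_cSupE X0 by blast
  then have gge: "gap d n m (hgen d n m Ls) phi \<le> g" by linarith
  have bd: "bdd_above X" using gap_facts(2)[OF m Ls phi] X_def by simp
  have gX: "gap d n m (hgen d n m Ls) phi = Sup X" unfolding gap_def X_def by simp
  have "0 \<le> Sup X" using cSup_upper[OF X0 bd] .
  then have g0: "0 \<le> g" using gge gX by linarith
  from g(1) obtain psi I where psi: "psi \<in> Bfrak d" "psi \<in> hgen d n m Ls"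
    "I \<in> supp_cells m phi" "I \<in> Iset n m g psi"
    unfolding X_def Ov_def BB_def by auto
  with g0 obtain J where J: "J \<in> supp_cells m psi" "I \<in> cch_pow n (nat g) J"
    unfolding Iset_def cell_iter_def by auto
  have "psi \<in> B0 d m \<union> Bch n m Ls" "psi \<notin> L" using psi(2) sub unfolding hgen_def by auto
  then obtain chi j where ch: "chi \<in> hgen d n m L"
    "\<forall>c \<in> supp_cells m psi. \<exists>K \<in> supp_cells m chi. c \<in> cch_pow n j K"
    using ancestor[OF n L Ls sub, of "fst psi"] by blast
  then obtain K where K: "K \<in> supp_cells m chi" "J \<in> cch_pow n j K" using J(1) by blast
  have I2: "I \<in> cch_pow n (j + nat g) K" using cch_pow_trans[OF K(2) J(2)] .
  define k where "k = int (j + nat g)"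
  have k0: "0 \<le> k" "nat k = j + nat g" using k_def by auto
  have "I \<in> Iset n m k chi" unfolding Iset_def cell_iter_def using k0 I2 K(1) by auto
  then have "chi \<in> Ov d n m phi (- k) (hgen d n m L)"
    unfolding Ov_def BB_def
    using ch(1) hgen_Bfrak[OF L] psi(3) by auto
  moreover have "k \<ge> gap d n m (hgen d n m Ls) phi" using gge g0 k_def by linarith
  ultimately show ?thesis by blast
qed

theorem lemma7p4:
  fixes d n m :: nat and L Ls :: "idx set"
  assumes "d \<ge> 1" and "n \<ge> 2" and "m \<ge> 2"
    and "lineage d n m L" and "lineage d n m Ls" and "L \<subseteq> Ls"
  shows "(\<forall>phi \<in> hgen d n m Ls. \<exists>k. k \<ge> gap d n m (hgen d n m Ls) phi
             \<and> Ov d n m phi (- k) (hgen d n m L) \<noteq> {})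
       \<and> (\<forall>phi \<in> hgen d n m Ls \<inter> hgen d n m L.
             gap d n m (hgen d n m Ls) phi \<le> gap d n m (hgen d n m L) phi)"
proof -
  have n: "n \<ge> 1" and m: "m \<ge> 1" using assms by simp_all
  note pi = part_i[OF n m assms(4,5,6)]
  show ?thesis
  proof (intro conjI ballI)
    fix phi assume "phi \<in> hgen d n m Ls" then show "\<exists>k. k \<ge> gap d n m (hgen d n m Ls) phi
             \<and> Ov d n m phi (- k) (hgen d n m L) \<noteq> {}" by (rule pi)
  next
    fix phi assume a: "phi \<in> hgen d n m Ls \<inter> hgen d n m L"
    then obtain k where k: "k \<ge> gap d n m (hgen d n m Ls) phi" "Ov d n m phi (- k) (hgen d n m L) \<noteq> {}"
      using pi by blast
    have aL: "phi \<in> hgen d n m L" using a by simp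
    have kX: "k \<in> {g::int. Ov d n m phi (- g) (hgen d n m L) \<noteq> {}}" using k(2) by simp
    have "k \<le> gap d n m (hgen d n m L) phi" unfolding gap_def
      by (rule cSup_upper[OF kX gap_facts(2)[OF m assms(4) aL]])
    with k(1) show "gap d n m (hgen d n m Ls) phi \<le> gap d n m (hgen d n m L) phi" by linarith
  qed
qed

end
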